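(* Let $\alpha > 1$, $\delta \in [0,1)$, $p, q \in [0,1]$, $P = \mathrm{Ber}(p)$, $Q = \mathrm{Ber}(q)$. Then $$D^\delta_\alpha(P\|Q) = \begin{cases} D_\alpha\!\left(\mathrm{Ber}\!\left(\tfrac{p}{1-\delta}\right) \,\Big\|\, \mathrm{Ber}\!\left(\tfrac{q-\delta}{1-\delta}\right)\right) & \text{if } p < q - \delta,\\[4pt] D_\alpha\!\left(\mathrm{Ber}\!\left(\tfrac{p-\delta}{1-\delta}\right) \,\Big\|\, \mathrm{Ber}\!\left(\tfrac{q}{1-\delta}\right)\right) & \text{if } p > q + \delta,\\[4pt] 0 & \text{if } |p - q| \le \delta.\end{cases}$$ Moreover, for fixed $p$, $q \mapsto D^\delta_\alpha(P\|Q)$ is non-increasing on $[0,p]$ and non-decreasing on $[p,1]$; and for fixed $q$, $p \mapsto D^\delta_\alpha(P\|Q)$ is non-increasing on $[0,q]$ and non-decreasing on $[q,1]$.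
   Context: $\mathrm{Ber}(p)$ is the Bernoulli distribution with success probability $p$. For distributions $P,Q$ on a countable set and $\alpha>1$, $D_\alpha(P\|Q) = \frac{1}{\alpha-1}\log\sum_x P(x)^\alpha Q(x)^{1-\alpha}$ (equal to $\infty$ if $P$ is not absolutely continuous w.r.t. $Q$). The approximate Rényi divergence is $D^\delta_\alpha(P\|Q) = \inf\{D_\alpha(P'\|Q') : P = (1-\delta)P' + \delta P'',\ Q = (1-\delta)Q' + \delta Q''\}$, where the infimum is over probability distributions $P', P'', Q', Q''$ on the same space. *)

theory Defs
  imports "HOL-Probability.Probability"
begin

definition renyi_sum :: "real \<Rightarrow> 'a pmf \<Rightarrow> 'a pmf \<Rightarrow> ennreal" where
  "renyi_sum \<alpha> P Q =
     (\<Sum>\<^sub>\<infinity>x\<in>set_pmf P. ennreal (pmf P x powr \<alpha> * pmf Q x powr (1 - \<alpha>)))"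

definition renyi_div :: "real \<Rightarrow> 'a pmf \<Rightarrow> 'a pmf \<Rightarrow> ereal" where
  "renyi_div \<alpha> P Q =
     (if set_pmf P \<subseteq> set_pmf Q \<and> renyi_sum \<alpha> P Q \<noteq> \<infinity>
      then ereal (ln (enn2real (renyi_sum \<alpha> P Q)) / (\<alpha> - 1))
      else \<infinity>)"

definition approx_renyi_div :: "real \<Rightarrow> real \<Rightarrow> 'a pmf \<Rightarrow> 'a pmf \<Rightarrow> ereal" where
  "approx_renyi_div \<alpha> \<delta> P Q =
     Inf {renyi_div \<alpha> P' Q' | P' P'' Q' Q''.
            (\<forall>x. pmf P x = (1 - \<delta>) * pmf P' x + \<delta> * pmf P'' x) \<and>
            (\<forall>x. pmf Q x = (1 - \<delta>) * pmf Q' x + \<delta> * pmf Q'' x)}"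

end

theory Submission imports Defs begin

definition Sb :: "real \<Rightarrow> real \<Rightarrow> real \<Rightarrow> real" where
  "Sb \<alpha> a b = a powr \<alpha> * b powr (1-\<alpha>) + (1-a) powr \<alpha> * (1-b) powr (1-\<alpha>)"

lemma Sb_sym: "Sb \<alpha> (1-a) (1-b) = Sb \<alpha> a b"
  by (simp add: Sb_def)

lemma Sb_refl: assumes "0 \<le> a" "a \<le> 1" shows "Sb \<alpha> a a = 1"
proof -
  have h: "x powr \<alpha> * x powr (1-\<alpha>) = x" if "0 \<le> x" for x :: real
    using that by (cases "x = 0") (simp_all add: powr_add[symmetric])
  show ?thesis unfolding Sb_def using h[of a] h[of "1-a"] assms by simp
qed

lemma A_up:
  fixes \<alpha> a1 a2 b :: real
  assumes "\<alpha> > 1" "0 < b" "b < 1" "b \<le> a1" "a1 \<le> a2" "a2 \<le> 1"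
  shows "Sb \<alpha> a1 b \<le> Sb \<alpha> a2 b"
proof -
  let ?f = "\<lambda>x. x powr \<alpha> * b powr (1-\<alpha>) + (1-x) powr \<alpha> * (1-b) powr (1-\<alpha>)"
  have "?f a1 \<le> ?f a2"
  proof (rule DERIV_nonneg_imp_increasing_open[OF assms(5)])
    fix x assume x: "a1 < x" "x < a2"
    then have x0: "0 < x" "x < 1" "b < x" using assms by auto
    have d: "DERIV ?f x :> (\<alpha> * x powr (\<alpha>-1) * 1) * b powr (1-\<alpha>) + (\<alpha> * (1-x) powr (\<alpha>-1) * (-1)) * (1-b) powr (1-\<alpha>)"
      by (intro derivative_eq_intros DERIV_fun_powr) (use x0 in auto)
    have "(1-x)/(1-b) \<le> x/b" using x0 assms
      by (smt (verit, best) divide_le_eq_1 le_divide_eq_1)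
    then have "((1-x)/(1-b)) powr (\<alpha>-1) \<le> (x/b) powr (\<alpha>-1)"
      using x0 assms by (intro powr_mono2) auto
    then have "(1-x) powr (\<alpha>-1) / (1-b) powr (\<alpha>-1) \<le> x powr (\<alpha>-1) / b powr (\<alpha>-1)"
      by (simp add: powr_divide)
    moreover have "b powr (1-\<alpha>) = 1 / b powr (\<alpha>-1)" "(1-b) powr (1-\<alpha>) = 1 / (1-b) powr (\<alpha>-1)"
      using powr_minus[of b "\<alpha>-1"] powr_minus[of "1-b" "\<alpha>-1"]
      by (simp_all add: divide_inverse)
    ultimately have "(1-x) powr (\<alpha>-1) * (1-b) powr (1-\<alpha>) \<le> x powr (\<alpha>-1) * b powr (1-\<alpha>)"
      by simp
    then have "0 \<le> (\<alpha> * x powr (\<alpha>-1) * 1) * b powr (1-\<alpha>) + (\<alpha> * (1-x) powr (\<alpha>-1) * (-1)) * (1-b) powr (1-\<alpha>)"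
      using assms by (simp add: algebra_simps)
    then show "\<exists>y. DERIV ?f x :> y \<and> 0 \<le> y" using d by blast
  next
    show "continuous_on {a1..a2} ?f"
      using assms by (intro continuous_intros continuous_on_powr') auto
  qed
  then show ?thesis by (simp add: Sb_def)
qed

lemma B_up:
  fixes \<alpha> a b1 b2 :: real
  assumes "\<alpha> > 1" "0 \<le> a" "a \<le> b1" "b1 \<le> b2" "b2 < 1"
  shows "Sb \<alpha> a b1 \<le> Sb \<alpha> a b2"
proof (cases "a = 0")
  case True
  then show ?thesis using assms unfolding Sb_def
    by (simp add: powr_mono2')
next
  case False
  then have a0: "0 < a" using assms by auto
  let ?g = "\<lambda>y. a powr \<alpha> * y powr (1-\<alpha>) + (1-a) powr \<alpha> * (1-y) powr (1-\<alpha>)"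
  let ?g' = "\<lambda>y. (\<alpha>-1) * ((1-a) powr \<alpha> * (1-y) powr (-\<alpha>) - a powr \<alpha> * y powr (-\<alpha>))"
  have "?g b1 \<le> ?g b2"
  proof (rule deriv_nonneg_imp_mono[of b1 b2 ?g ?g'])
    fix y assume y: "y \<in> {b1..b2}"
    then have y0: "0 < y" "y < 1" "a \<le> y" using assms a0 by auto
    have d: "DERIV ?g y :> a powr \<alpha> * ((1-\<alpha>) * y powr (1-\<alpha>-1) * 1) + (1-a) powr \<alpha> * ((1-\<alpha>) * (1-y) powr (1-\<alpha>-1) * (-1))"
      by (intro derivative_eq_intros DERIV_fun_powr) (use y0 in auto)
    show "(?g has_real_derivative ?g' y) (at y)"
      using d by (simp add: algebra_simps)
    have "a / y \<le> (1-a)/(1-y)" using y0 assms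
      by (smt (verit, best) divide_le_eq_1 le_divide_eq_1)
    then have "(a/y) powr \<alpha> \<le> ((1-a)/(1-y)) powr \<alpha>"
      using y0 assms by (intro powr_mono2) auto
    then have "a powr \<alpha> / y powr \<alpha> \<le> (1-a) powr \<alpha> / (1-y) powr \<alpha>"
      by (simp add: powr_divide)
    then have "a powr \<alpha> * y powr (-\<alpha>) \<le> (1-a) powr \<alpha> * (1-y) powr (-\<alpha>)"
      by (simp add: powr_minus divide_inverse)
    then show "0 \<le> ?g' y" using assms by simp
  qed (use assms in auto)
  then show ?thesis by (simp add: Sb_def)
qed

lemma set_pmf_bern: assumes "0 \<le> a" "a \<le> 1"
  shows "x \<in> set_pmf (bernoulli_pmf a) \<longleftrightarrow> (if x then 0 < a else a < 1)"
  using assms by (cases x) (auto simp: set_pmf_eq)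

lemma renyi_sum_bern:
  assumes "\<alpha> > 1" "0 \<le> a" "a \<le> 1" "0 \<le> b" "b \<le> 1"
  shows "renyi_sum \<alpha> (bernoulli_pmf a) (bernoulli_pmf b) = ennreal (Sb \<alpha> a b)"
proof -
  let ?f = "\<lambda>x. ennreal (pmf (bernoulli_pmf a) x powr \<alpha> * pmf (bernoulli_pmf b) x powr (1 - \<alpha>))"
  have "renyi_sum \<alpha> (bernoulli_pmf a) (bernoulli_pmf b) = infsum ?f UNIV"
    unfolding renyi_sum_def
    by (rule infsum_cong_neutral) (use assms in \<open>auto simp: set_pmf_eq\<close>)
  also have "\<dots> = ?f True + ?f False" by (simp add: UNIV_bool)
  also have "\<dots> = ennreal (a powr \<alpha> * b powr (1-\<alpha>)) + ennreal ((1-a) powr \<alpha> * (1-b) powr (1-\<alpha>))"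
    using assms by simp
  also have "\<dots> = ennreal (Sb \<alpha> a b)"
    unfolding Sb_def by (rule ennreal_plus[symmetric]) auto
  finally show ?thesis .
qed

lemma F_explicit:
  assumes "\<alpha> > 1" "0 \<le> a" "a \<le> 1" "0 \<le> b" "b \<le> 1"
  shows "renyi_div \<alpha> (bernoulli_pmf a) (bernoulli_pmf b) =
    (if (0 < a \<longrightarrow> 0 < b) \<and> (a < 1 \<longrightarrow> b < 1) then ereal (ln (Sb \<alpha> a b) / (\<alpha> - 1)) else \<infinity>)"
proof -
  have sub: "set_pmf (bernoulli_pmf a) \<subseteq> set_pmf (bernoulli_pmf b) \<longleftrightarrow> (0 < a \<longrightarrow> 0 < b) \<and> (a < 1 \<longrightarrow> b < 1)"
  proof
    assume "set_pmf (bernoulli_pmf a) \<subseteq> set_pmf (bernoulli_pmf b)"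
    then show "(0 < a \<longrightarrow> 0 < b) \<and> (a < 1 \<longrightarrow> b < 1)"
      using set_pmf_bern[OF assms(2,3), of True] set_pmf_bern[OF assms(2,3), of False]
        set_pmf_bern[OF assms(4,5), of True] set_pmf_bern[OF assms(4,5), of False] by auto
  next
    assume "(0 < a \<longrightarrow> 0 < b) \<and> (a < 1 \<longrightarrow> b < 1)"
    then show "set_pmf (bernoulli_pmf a) \<subseteq> set_pmf (bernoulli_pmf b)"
      using set_pmf_bern[OF assms(2,3)] set_pmf_bern[OF assms(4,5)] by auto
  qed
  have nn: "0 \<le> Sb \<alpha> a b" using assms unfolding Sb_def by simp
  show ?thesis unfolding renyi_div_def sub renyi_sum_bern[OF assms] using nn by simp
qed

lemma F_sym:
  assumes "\<alpha> > 1" "0 \<le> a" "a \<le> 1" "0 \<le> b" "b \<le> 1"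
  shows "renyi_div \<alpha> (bernoulli_pmf (1-a)) (bernoulli_pmf (1-b)) = renyi_div \<alpha> (bernoulli_pmf a) (bernoulli_pmf b)"
  using assms by (simp add: F_explicit Sb_sym)

lemma ln_div_mono:
  assumes "\<alpha> > 1" "1 \<le> x" "x \<le> y"
  shows "ereal (ln x / (\<alpha> - 1)) \<le> ereal (ln y / (\<alpha> - 1))"
  using assms by (simp add: divide_right_mono)

lemma FA:
  assumes "\<alpha> > 1" "0 \<le> b" "b \<le> a1" "a1 \<le> a2" "a2 \<le> 1"
  shows "renyi_div \<alpha> (bernoulli_pmf a1) (bernoulli_pmf b) \<le> renyi_div \<alpha> (bernoulli_pmf a2) (bernoulli_pmf b)"
proof (cases "(0 < a2 \<longrightarrow> 0 < b) \<and> (a2 < 1 \<longrightarrow> b < 1)")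
  case False
  then show ?thesis using assms by (simp add: F_explicit)
next
  case ok: True
  show ?thesis
  proof (cases "b = 0 \<or> b = 1")
    case True
    then have "a1 = a2" using ok assms by auto
    then show ?thesis by simp
  next
    case False
    then have b: "0 < b" "b < 1" using assms by auto
    have "1 \<le> Sb \<alpha> a1 b" using A_up[OF assms(1) b, of b a1] Sb_refl[of b \<alpha>] assms b by simp
    moreover have "Sb \<alpha> a1 b \<le> Sb \<alpha> a2 b" using A_up[OF assms(1) b assms(3,4,5)] .
    ultimately show ?thesis using assms b by (simp add: F_explicit divide_right_mono)
  qed
qed

lemma FA':
  assumes "\<alpha> > 1" "0 \<le> a2" "a2 \<le> a1" "a1 \<le> b" "b \<le> 1"
  shows "renyi_div \<alpha> (bernoulli_pmf a1) (bernoulli_pmf b) \<le> renyi_div \<alpha> (bernoulli_pmf a2) (bernoulli_pmf b)"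
  using FA[OF assms(1), of "1-b" "1-a1" "1-a2"] assms F_sym[OF assms(1), of a1 b] F_sym[OF assms(1), of a2 b]
  by simp

lemma FB:
  assumes "\<alpha> > 1" "0 \<le> a" "a \<le> b1" "b1 \<le> b2" "b2 \<le> 1"
  shows "renyi_div \<alpha> (bernoulli_pmf a) (bernoulli_pmf b1) \<le> renyi_div \<alpha> (bernoulli_pmf a) (bernoulli_pmf b2)"
proof (cases "(0 < a \<longrightarrow> 0 < b2) \<and> (a < 1 \<longrightarrow> b2 < 1)")
  case False
  then show ?thesis using assms by (simp add: F_explicit)
next
  case ok: True
  show ?thesis
  proof (cases "b2 = 1")
    case True
    then have "b1 = b2" using ok assms by auto
    then show ?thesis by simp
  next
    case False
    then have b: "b2 < 1" using assms by auto
    have "1 \<le> Sb \<alpha> a b1" using B_up[OF assms(1,2), of a b1] Sb_refl[of a \<alpha>] assms b by simp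
    moreover have "Sb \<alpha> a b1 \<le> Sb \<alpha> a b2" using B_up[OF assms(1,2,3,4) b] .
    ultimately show ?thesis using assms b by (simp add: F_explicit divide_right_mono)
  qed
qed

lemma FB':
  assumes "\<alpha> > 1" "0 \<le> b2" "b2 \<le> b1" "b1 \<le> a" "a \<le> 1"
  shows "renyi_div \<alpha> (bernoulli_pmf a) (bernoulli_pmf b1) \<le> renyi_div \<alpha> (bernoulli_pmf a) (bernoulli_pmf b2)"
  using FB[OF assms(1), of "1-a" "1-b1" "1-b2"] assms F_sym[OF assms(1), of a b1] F_sym[OF assms(1), of a b2]
  by simp

lemma F_refl:
  assumes "\<alpha> > 1" "0 \<le> a" "a \<le> 1"
  shows "renyi_div \<alpha> (bernoulli_pmf a) (bernoulli_pmf a) = 0"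
  using assms by (simp add: F_explicit Sb_refl zero_ereal_def)

lemma F_nonneg:
  assumes "\<alpha> > 1" "0 \<le> a" "a \<le> 1" "0 \<le> b" "b \<le> 1"
  shows "0 \<le> renyi_div \<alpha> (bernoulli_pmf a) (bernoulli_pmf b)"
proof (cases "b \<le> a")
  case True
  then show ?thesis using FA[OF assms(1,4), of b a] F_refl[OF assms(1,4,5)] assms by simp
next
  case False
  then show ?thesis using FA'[OF assms(1,2), of b b] F_refl[OF assms(1,4,5)] assms by simp
qed

definition Iv :: "real \<Rightarrow> real \<Rightarrow> real set" where
  "Iv \<delta> p = {a. 0 \<le> a \<and> a \<le> 1 \<and> (1-\<delta>)*a \<le> p \<and> p \<le> (1-\<delta>)*a + \<delta>}"

lemma bool_pmf_bern: "P = bernoulli_pmf (pmf P True)"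
proof (rule pmf_eqI)
  fix i show "pmf P i = pmf (bernoulli_pmf (pmf P True)) i"
    by (cases i) (auto simp: pmf_le_1 pmf_False_conv_True)
qed

lemma decomp_Iv:
  assumes "0 \<le> \<delta>" "\<delta> < 1" "0 \<le> p" "p \<le> 1"
    and "\<forall>x. pmf (bernoulli_pmf p) x = (1 - \<delta>) * pmf P' x + \<delta> * pmf P'' x"
  shows "pmf P' True \<in> Iv \<delta> p"
proof -
  have "pmf (bernoulli_pmf p) True = (1 - \<delta>) * pmf P' True + \<delta> * pmf P'' True" using assms(5) by blast
  then have e: "p = (1 - \<delta>) * pmf P' True + \<delta> * pmf P'' True" using assms(1-4) by simp
  have "0 \<le> \<delta> * pmf P'' True" "\<delta> * pmf P'' True \<le> \<delta>"
    using assms(1) pmf_le_1[of P'' True] by (auto simp: mult_left_le)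
  then show ?thesis using e unfolding Iv_def by (auto simp: pmf_le_1)
qed

lemma Iv_decomp:
  assumes "0 \<le> \<delta>" "\<delta> < 1" "0 \<le> p" "p \<le> 1" "a \<in> Iv \<delta> p"
  shows "\<exists>P''. \<forall>x. pmf (bernoulli_pmf p) x = (1 - \<delta>) * pmf (bernoulli_pmf a) x + \<delta> * pmf P'' x"
proof -
  define c where "c = (if \<delta> = 0 then 0 else (p - (1-\<delta>)*a)/\<delta>)"
  have a: "0 \<le> a" "a \<le> 1" "(1-\<delta>)*a \<le> p" "p \<le> (1-\<delta>)*a + \<delta>" using assms(5) by (auto simp: Iv_def)
  have dc: "\<delta> * c = p - (1-\<delta>)*a" using a by (cases "\<delta> = 0") (auto simp: c_def)
  have c: "0 \<le> c" "c \<le> 1"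
  proof -
    show "0 \<le> c" using a assms by (auto simp: c_def)
    show "c \<le> 1" using a assms by (auto simp: c_def divide_le_eq)
  qed
  show ?thesis
  proof (intro exI allI)
    fix x show "pmf (bernoulli_pmf p) x = (1 - \<delta>) * pmf (bernoulli_pmf a) x + \<delta> * pmf (bernoulli_pmf c) x"
      using a c dc assms by (cases x) (auto simp: algebra_simps)
  qed
qed

lemma approx_char:
  assumes "0 \<le> \<delta>" "\<delta> < 1" "0 \<le> p" "p \<le> 1" "0 \<le> q" "q \<le> 1"
  shows "approx_renyi_div \<alpha> \<delta> (bernoulli_pmf p) (bernoulli_pmf q) =
    Inf {renyi_div \<alpha> (bernoulli_pmf a) (bernoulli_pmf b) | a b. a \<in> Iv \<delta> p \<and> b \<in> Iv \<delta> q}"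
  unfolding approx_renyi_div_def
proof (rule arg_cong[where f = Inf], safe)
  fix P' P'' Q' Q'' :: "bool pmf"
  assume h: "\<forall>x. pmf (bernoulli_pmf p) x = (1 - \<delta>) * pmf P' x + \<delta> * pmf P'' x"
    "\<forall>x. pmf (bernoulli_pmf q) x = (1 - \<delta>) * pmf Q' x + \<delta> * pmf Q'' x"
  show "\<exists>a b. renyi_div \<alpha> P' Q' = renyi_div \<alpha> (bernoulli_pmf a) (bernoulli_pmf b) \<and> a \<in> Iv \<delta> p \<and> b \<in> Iv \<delta> q"
    using decomp_Iv[OF assms(1-4) h(1)] decomp_Iv[OF assms(1,2,5,6) h(2)]
      bool_pmf_bern[of P'] bool_pmf_bern[of Q'] by metis
next
  fix a b assume ab: "a \<in> Iv \<delta> p" "b \<in> Iv \<delta> q"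
  obtain P'' where P: "\<forall>x. pmf (bernoulli_pmf p) x = (1 - \<delta>) * pmf (bernoulli_pmf a) x + \<delta> * pmf P'' x"
    using Iv_decomp[OF assms(1-4) ab(1)] by blast
  obtain Q'' where Q: "\<forall>x. pmf (bernoulli_pmf q) x = (1 - \<delta>) * pmf (bernoulli_pmf b) x + \<delta> * pmf Q'' x"
    using Iv_decomp[OF assms(1,2,5,6) ab(2)] by blast
  show "\<exists>P' P'' Q' Q''. renyi_div \<alpha> (bernoulli_pmf a) (bernoulli_pmf b) = renyi_div \<alpha> P' Q' \<and>
          (\<forall>x. pmf (bernoulli_pmf p) x = (1 - \<delta>) * pmf P' x + \<delta> * pmf P'' x) \<and>
          (\<forall>x. pmf (bernoulli_pmf q) x = (1 - \<delta>) * pmf Q' x + \<delta> * pmf Q'' x)"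
    using P Q by blast
qed

lemma Inf_attained:
  fixes v :: ereal
  assumes "v \<in> S" "\<And>s. s \<in> S \<Longrightarrow> v \<le> s"
  shows "Inf S = v"
  using assms by (meson Inf_greatest Inf_lower antisym)

lemma approx_val:
  fixes \<alpha> \<delta> p q :: real
  assumes "\<alpha> > 1" and "0 \<le> \<delta>" and "\<delta> < 1"
    and "0 \<le> p" and "p \<le> 1" and "0 \<le> q" and "q \<le> 1"
  shows "approx_renyi_div \<alpha> \<delta> (bernoulli_pmf p) (bernoulli_pmf q) =
           (if p < q - \<delta> then
              renyi_div \<alpha> (bernoulli_pmf (p / (1 - \<delta>))) (bernoulli_pmf ((q - \<delta>) / (1 - \<delta>)))
            else if p > q + \<delta> then
              renyi_div \<alpha> (bernoulli_pmf ((p - \<delta>) / (1 - \<delta>))) (bernoulli_pmf (q / (1 - \<delta>)))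
            else 0)"
proof -
  have d: "0 < 1 - \<delta>" "\<delta> * \<delta> \<le> \<delta>" using assms mult_left_le[of \<delta> \<delta>] by simp_all
  have IvD: "0 \<le> a \<and> a \<le> 1 \<and> a \<le> x / (1-\<delta>) \<and> (x - \<delta>)/(1-\<delta>) \<le> a" if "a \<in> Iv \<delta> x" for a x
    using that d unfolding Iv_def by (auto simp: field_simps)
  have IvI: "a \<in> Iv \<delta> x" if "0 \<le> a" "a \<le> 1" "a \<le> x / (1-\<delta>)" "(x - \<delta>)/(1-\<delta>) \<le> a" for a x
    using that d unfolding Iv_def by (auto simp: field_simps)
  note F = F_explicit[OF assms(1)]
  let ?S = "{renyi_div \<alpha> (bernoulli_pmf a) (bernoulli_pmf b) | a b. a \<in> Iv \<delta> p \<and> b \<in> Iv \<delta> q}"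
  have eq: "approx_renyi_div \<alpha> \<delta> (bernoulli_pmf p) (bernoulli_pmf q) = Inf ?S"
    by (rule approx_char) (use assms in auto)
  consider (lt) "p < q - \<delta>" | (gt) "p > q + \<delta>" | (mid) "\<not> p < q - \<delta>" "\<not> p > q + \<delta>" by linarith
  then show ?thesis
  proof cases
    case lt
    define a0 where "a0 = p / (1-\<delta>)"
    define b0 where "b0 = (q - \<delta>) / (1-\<delta>)"
    have a0: "0 \<le> a0" "a0 \<le> 1" using assms lt d by (auto simp: a0_def field_simps)
    have b0: "0 \<le> b0" "b0 \<le> 1" using assms lt d by (auto simp: b0_def field_simps)
    have ab0: "a0 \<le> b0" unfolding a0_def b0_def by (rule divide_right_mono) (use lt d in auto)
    have "a0 \<in> Iv \<delta> p" using a0 d assms by (intro IvI) (auto simp: a0_def field_simps)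
    moreover have "b0 \<in> Iv \<delta> q" using b0 d assms by (intro IvI) (auto simp: b0_def field_simps)
    ultimately have mem: "renyi_div \<alpha> (bernoulli_pmf a0) (bernoulli_pmf b0) \<in> ?S" by blast
    have low: "renyi_div \<alpha> (bernoulli_pmf a0) (bernoulli_pmf b0) \<le> s" if sS: "s \<in> ?S" for s
    proof -
      obtain a b where s: "s = renyi_div \<alpha> (bernoulli_pmf a) (bernoulli_pmf b)" "a \<in> Iv \<delta> p" "b \<in> Iv \<delta> q"
        using sS by blast
      have a: "0 \<le> a" "a \<le> a0" and b: "b0 \<le> b" "b \<le> 1"
        using IvD[OF s(2)] IvD[OF s(3)] by (auto simp: a0_def b0_def)
      have "renyi_div \<alpha> (bernoulli_pmf a0) (bernoulli_pmf b0) \<le> renyi_div \<alpha> (bernoulli_pmf a0) (bernoulli_pmf b)"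
        using FB[OF assms(1) a0(1) ab0 b(1) b(2)] .
      also have "\<dots> \<le> renyi_div \<alpha> (bernoulli_pmf a) (bernoulli_pmf b)"
        using FA'[OF assms(1) a(1) a(2)] ab0 b by simp
      finally show ?thesis using s by simp
    qed
    show ?thesis unfolding eq using Inf_attained[OF mem low] lt by (simp add: a0_def b0_def)
  next
    case gt
    define a0 where "a0 = (p - \<delta>) / (1-\<delta>)"
    define b0 where "b0 = q / (1-\<delta>)"
    have a0: "0 \<le> a0" "a0 \<le> 1" using assms gt d by (auto simp: a0_def field_simps)
    have b0: "0 \<le> b0" "b0 \<le> 1" using assms gt d by (auto simp: b0_def field_simps)
    have ab0: "b0 \<le> a0" unfolding a0_def b0_def by (rule divide_right_mono) (use gt d in auto)
    have "a0 \<in> Iv \<delta> p" using a0 d assms by (intro IvI) (auto simp: a0_def field_simps)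
    moreover have "b0 \<in> Iv \<delta> q" using b0 d assms by (intro IvI) (auto simp: b0_def field_simps)
    ultimately have mem: "renyi_div \<alpha> (bernoulli_pmf a0) (bernoulli_pmf b0) \<in> ?S" by blast
    have low: "renyi_div \<alpha> (bernoulli_pmf a0) (bernoulli_pmf b0) \<le> s" if sS: "s \<in> ?S" for s
    proof -
      obtain a b where s: "s = renyi_div \<alpha> (bernoulli_pmf a) (bernoulli_pmf b)" "a \<in> Iv \<delta> p" "b \<in> Iv \<delta> q"
        using sS by blast
      have a: "a0 \<le> a" "a \<le> 1" and b: "0 \<le> b" "b \<le> b0"
        using IvD[OF s(2)] IvD[OF s(3)] by (auto simp: a0_def b0_def)
      have "renyi_div \<alpha> (bernoulli_pmf a0) (bernoulli_pmf b0) \<le> renyi_div \<alpha> (bernoulli_pmf a0) (bernoulli_pmf b)"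
        using FB'[OF assms(1) b(1) b(2) ab0 a0(2)] .
      also have "\<dots> \<le> renyi_div \<alpha> (bernoulli_pmf a) (bernoulli_pmf b)"
        using FA[OF assms(1) b(1) _ a(1) a(2)] ab0 b by simp
      finally show ?thesis using s by simp
    qed
    show ?thesis unfolding eq using Inf_attained[OF mem low] gt assms(2) by (simp add: a0_def b0_def)
  next
    case mid
    define m where "m = max (max (p - \<delta>) (q - \<delta>)) 0"
    define t where "t = m / (1 - \<delta>)"
    have m: "0 \<le> m" "m \<le> 1 - \<delta>" "m \<le> p" "m \<le> q" "p - \<delta> \<le> m" "q - \<delta> \<le> m"
      using assms mid by (auto simp: m_def)
    have t: "0 \<le> t" "t \<le> 1" using m d by (auto simp: t_def field_simps)
    have "t \<le> p / (1-\<delta>)" "t \<le> q / (1-\<delta>)" "(p-\<delta>)/(1-\<delta>) \<le> t" "(q-\<delta>)/(1-\<delta>) \<le> t"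
      unfolding t_def using m d by (auto intro: divide_right_mono)
    then have "t \<in> Iv \<delta> p" "t \<in> Iv \<delta> q" using t by (auto intro: IvI)
    then have mem: "renyi_div \<alpha> (bernoulli_pmf t) (bernoulli_pmf t) \<in> ?S" by blast
    have low: "renyi_div \<alpha> (bernoulli_pmf t) (bernoulli_pmf t) \<le> s" if sS: "s \<in> ?S" for s
    proof -
      obtain a b where s: "s = renyi_div \<alpha> (bernoulli_pmf a) (bernoulli_pmf b)" "a \<in> Iv \<delta> p" "b \<in> Iv \<delta> q"
        using sS by blast
      show ?thesis using F_refl[OF assms(1) t] F_nonneg[OF assms(1)] IvD[OF s(2)] IvD[OF s(3)] s(1) by simp
    qed
    show ?thesis unfolding eq using Inf_attained[OF mem low] mid F_refl[OF assms(1) t] by simp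
  qed
qed

lemma approx_nonneg:
  assumes "0 \<le> \<delta>" "\<delta> < 1" "0 \<le> p" "p \<le> 1" "0 \<le> q" "q \<le> 1" "\<alpha> > 1"
  shows "0 \<le> approx_renyi_div \<alpha> \<delta> (bernoulli_pmf p) (bernoulli_pmf q)"
  unfolding approx_char[OF assms(1-6)]
  by (rule Inf_greatest) (auto intro!: F_nonneg[OF assms(7)] simp: Iv_def)

lemma dm: "x \<le> y \<Longrightarrow> \<delta> < 1 \<Longrightarrow> x / (1 - \<delta>) \<le> y / (1 - (\<delta>::real))"
  by (rule divide_right_mono) auto
lemma d1: "x \<le> 1 - \<delta> \<Longrightarrow> \<delta> < 1 \<Longrightarrow> x / (1 - \<delta>) \<le> (1::real)"
  by (simp add: divide_le_eq)
lemma d0: "0 \<le> x \<Longrightarrow> \<delta> < 1 \<Longrightarrow> 0 \<le> x / (1 - (\<delta>::real))"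
  by simp

theorem mainTheorem2:
  fixes \<alpha> \<delta> p q :: real
  assumes "\<alpha> > 1" and "0 \<le> \<delta>" and "\<delta> < 1"
    and "0 \<le> p" and "p \<le> 1" and "0 \<le> q" and "q \<le> 1"
  shows "approx_renyi_div \<alpha> \<delta> (bernoulli_pmf p) (bernoulli_pmf q) =
           (if p < q - \<delta> then
              renyi_div \<alpha> (bernoulli_pmf (p / (1 - \<delta>))) (bernoulli_pmf ((q - \<delta>) / (1 - \<delta>)))
            else if p > q + \<delta> then
              renyi_div \<alpha> (bernoulli_pmf ((p - \<delta>) / (1 - \<delta>))) (bernoulli_pmf (q / (1 - \<delta>)))
            else 0) \<and>
         antimono_on {0..p} (\<lambda>q'. approx_renyi_div \<alpha> \<delta> (bernoulli_pmf p) (bernoulli_pmf q')) \<and>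
         mono_on {p..1} (\<lambda>q'. approx_renyi_div \<alpha> \<delta> (bernoulli_pmf p) (bernoulli_pmf q')) \<and>
         antimono_on {0..q} (\<lambda>p'. approx_renyi_div \<alpha> \<delta> (bernoulli_pmf p') (bernoulli_pmf q)) \<and>
         mono_on {q..1} (\<lambda>p'. approx_renyi_div \<alpha> \<delta> (bernoulli_pmf p') (bernoulli_pmf q))"
proof (intro conjI)
  note AV = approx_val[OF assms(1-3)]
  note NN = approx_nonneg[OF assms(2,3) _ _ _ _ assms(1)]
  show "approx_renyi_div \<alpha> \<delta> (bernoulli_pmf p) (bernoulli_pmf q) =
           (if p < q - \<delta> then
              renyi_div \<alpha> (bernoulli_pmf (p / (1 - \<delta>))) (bernoulli_pmf ((q - \<delta>) / (1 - \<delta>)))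
            else if p > q + \<delta> then
              renyi_div \<alpha> (bernoulli_pmf ((p - \<delta>) / (1 - \<delta>))) (bernoulli_pmf (q / (1 - \<delta>)))
            else 0)"
    by (rule AV) (use assms in auto)
  show "antimono_on {0..p} (\<lambda>q'. approx_renyi_div \<alpha> \<delta> (bernoulli_pmf p) (bernoulli_pmf q'))"
  proof (rule monotone_onI)
    fix q1 q2 assume q: "q1 \<in> {0..p}" "q2 \<in> {0..p}" "q1 \<le> q2"
    show "approx_renyi_div \<alpha> \<delta> (bernoulli_pmf p) (bernoulli_pmf q1) \<ge> approx_renyi_div \<alpha> \<delta> (bernoulli_pmf p) (bernoulli_pmf q2)"
    proof (cases "p > q2 + \<delta>")
      case True
      have "renyi_div \<alpha> (bernoulli_pmf ((p - \<delta>) / (1 - \<delta>))) (bernoulli_pmf (q2 / (1 - \<delta>)))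
          \<le> renyi_div \<alpha> (bernoulli_pmf ((p - \<delta>) / (1 - \<delta>))) (bernoulli_pmf (q1 / (1 - \<delta>)))"
        by (rule FB') (use assms q True in \<open>auto intro: dm d1 d0\<close>)
      then show ?thesis using AV[of p q1] AV[of p q2] assms q True by auto
    next
      case False
      then show ?thesis using AV[of p q2] NN[of p q1] assms q by auto
    qed
  qed
  show "mono_on {p..1} (\<lambda>q'. approx_renyi_div \<alpha> \<delta> (bernoulli_pmf p) (bernoulli_pmf q'))"
  proof (rule monotone_onI)
    fix q1 q2 assume q: "q1 \<in> {p..1}" "q2 \<in> {p..1}" "q1 \<le> q2"
    show "approx_renyi_div \<alpha> \<delta> (bernoulli_pmf p) (bernoulli_pmf q1) \<le> approx_renyi_div \<alpha> \<delta> (bernoulli_pmf p) (bernoulli_pmf q2)"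
    proof (cases "p < q1 - \<delta>")
      case True
      have "renyi_div \<alpha> (bernoulli_pmf (p / (1 - \<delta>))) (bernoulli_pmf ((q1 - \<delta>) / (1 - \<delta>)))
          \<le> renyi_div \<alpha> (bernoulli_pmf (p / (1 - \<delta>))) (bernoulli_pmf ((q2 - \<delta>) / (1 - \<delta>)))"
        by (rule FB) (use assms q True in \<open>auto intro: dm d1 d0\<close>)
      then show ?thesis using AV[of p q1] AV[of p q2] assms q True by auto
    next
      case False
      then show ?thesis using AV[of p q1] NN[of p q2] assms q by auto
    qed
  qed
  show "antimono_on {0..q} (\<lambda>p'. approx_renyi_div \<alpha> \<delta> (bernoulli_pmf p') (bernoulli_pmf q))"
  proof (rule monotone_onI)
    fix p1 p2 assume p: "p1 \<in> {0..q}" "p2 \<in> {0..q}" "p1 \<le> p2"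
    show "approx_renyi_div \<alpha> \<delta> (bernoulli_pmf p1) (bernoulli_pmf q) \<ge> approx_renyi_div \<alpha> \<delta> (bernoulli_pmf p2) (bernoulli_pmf q)"
    proof (cases "p2 < q - \<delta>")
      case True
      have "renyi_div \<alpha> (bernoulli_pmf (p2 / (1 - \<delta>))) (bernoulli_pmf ((q - \<delta>) / (1 - \<delta>)))
          \<le> renyi_div \<alpha> (bernoulli_pmf (p1 / (1 - \<delta>))) (bernoulli_pmf ((q - \<delta>) / (1 - \<delta>)))"
        by (rule FA') (use assms p True in \<open>auto intro: dm d1 d0\<close>)
      then show ?thesis using AV[of p1 q] AV[of p2 q] assms p True by auto
    next
      case False
      then show ?thesis using AV[of p2 q] NN[of p1 q] assms p by auto
    qed
  qed
  show "mono_on {q..1} (\<lambda>p'. approx_renyi_div \<alpha> \<delta> (bernoulli_pmf p') (bernoulli_pmf q))"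
  proof (rule monotone_onI)
    fix p1 p2 assume p: "p1 \<in> {q..1}" "p2 \<in> {q..1}" "p1 \<le> p2"
    show "approx_renyi_div \<alpha> \<delta> (bernoulli_pmf p1) (bernoulli_pmf q) \<le> approx_renyi_div \<alpha> \<delta> (bernoulli_pmf p2) (bernoulli_pmf q)"
    proof (cases "p1 > q + \<delta>")
      case True
      have "renyi_div \<alpha> (bernoulli_pmf ((p1 - \<delta>) / (1 - \<delta>))) (bernoulli_pmf (q / (1 - \<delta>)))
          \<le> renyi_div \<alpha> (bernoulli_pmf ((p2 - \<delta>) / (1 - \<delta>))) (bernoulli_pmf (q / (1 - \<delta>)))"
        by (rule FA) (use assms p True in \<open>auto intro: dm d1 d0\<close>)
      then show ?thesis using AV[of p1 q] AV[of p2 q] assms p True by auto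
    next
      case False
      then show ?thesis using AV[of p1 q] NN[of p2 q] assms p by auto
    qed
  qed
qed

end
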